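(* Let $r\geq 2$ be a fixed integer, let $V$ be a set of $n$ vertices, and let $d=d(n)$ satisfy $d=o(n^{r-1})$. Suppose $H,H'\subseteq\binom{V}{r}$ are two edge-disjoint $r$-graphs on $V$ such that $|H|=o(nd)$ and $\Delta(H')=o(n^{r-1})$. Then, for all $e\in\binom{V}{r}\setminus(H\cup H')$, \[\mathbb{P}\left[e\in G_{n,d}^{(r)}\mid\mathcal{G}_{n,d,H,H'}^{(r)}\right]\leq(r-1)!\frac{d}{n^{r-1}}\left(1+O\left(\frac{1}{n}+\frac{d}{n^{r-1}}+\frac{|H|}{nd}+\frac{\Delta(H')}{n^{r-1}}\right)\right).\]
   Context: An $r$-graph on $V$ is a set of $r$-element subsets (edges) of $V$; $|H|$ is its number of edges, $\deg_H(v)$ the number of edges containing $v$, and $\Delta(H)$ the maximum degree. $\mathcal{G}_{n,d}^{(r)}$ is the set of all $d$-regular $r$-graphs on the $n$-vertex set $V$ (it is assumed throughout that $r\mid nd$), and $G_{n,d}^{(r)}$ is chosen uniformly at random from it. For $r$-graphs $H,H'$ on $V$, $\mathcal{G}_{n,d,H,H'}^{(r)}$ is the set of $G\in\mathcal{G}_{n,d}^{(r)}$ with $H\subseteq G$ and $H'\cap G=\varnothing$; it is also used to denote the event $G_{n,d}^{(r)}\in\mathcal{G}_{n,d,H,H'}^{(r)}$. Asymptotics are as $n\to\infty$; the implicit constant in $O(\cdot)$ depends only on $r$. *)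

theory Defs
  imports Complex_Main "HOL-Library.Landau_Symbols"
begin

definition r_subsets :: "nat set \<Rightarrow> nat \<Rightarrow> nat set set" where
  "r_subsets V r = {e. e \<subseteq> V \<and> card e = r}"

definition hdeg :: "nat set set \<Rightarrow> nat \<Rightarrow> nat" where
  "hdeg G v = card {e \<in> G. v \<in> e}"

definition maxdeg :: "nat \<Rightarrow> nat set set \<Rightarrow> nat" where
  "maxdeg n G = Max (insert 0 (hdeg G ` {0..<n}))"

definition regular_graphs :: "nat \<Rightarrow> nat \<Rightarrow> nat \<Rightarrow> nat set set set" where
  "regular_graphs r n d =
     {G. G \<subseteq> r_subsets {0..<n} r \<and> (\<forall>v\<in>{0..<n}. hdeg G v = d)}"

definition cond_graphs ::
  "nat \<Rightarrow> nat \<Rightarrow> nat \<Rightarrow> nat set set \<Rightarrow> nat set set \<Rightarrow> nat set set set" where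
  "cond_graphs r n d H H' = {G \<in> regular_graphs r n d. H \<subseteq> G \<and> H' \<inter> G = {}}"

text \<open>P[e in G | G_{n,d,H,H'}] for the uniform random d-regular r-graph
  (0 if the conditioning event is empty).\<close>
definition cond_prob ::
  "nat \<Rightarrow> nat \<Rightarrow> nat \<Rightarrow> nat set set \<Rightarrow> nat set set \<Rightarrow> nat set \<Rightarrow> real" where
  "cond_prob r n d H H' e =
     real (card {G \<in> cond_graphs r n d H H'. e \<in> G}) / real (card (cond_graphs r n d H H'))"

end

theory Submission imports Defs "HOL-Combinatorics.Multiset_Permutations" "HOL-Library.FuncSet"
begin

lemma card_bij_ext:
  assumes "finite S" "card S = k" "S \<subseteq> V"
  shows "card {\<phi> \<in> {0..<k} \<rightarrow>\<^sub>E V. inj_on \<phi> {0..<k} \<and> \<phi> ` {0..<k} = S} = fact k"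
proof -
  let ?P = "{\<phi> \<in> {0..<k} \<rightarrow>\<^sub>E V. inj_on \<phi> {0..<k} \<and> \<phi> ` {0..<k} = S}"
  let ?f = "\<lambda>\<phi>. map \<phi> [0..<k]"
  have inj: "inj_on ?f ?P"
  proof (rule inj_onI)
    fix a b assume a: "a \<in> ?P" and b: "b \<in> ?P" and eq: "?f a = ?f b"
    show "a = b"
    proof (rule extensionalityI[of _ "{0..<k}"])
      show "a \<in> extensional {0..<k}" using a by (auto simp: PiE_def)
      show "b \<in> extensional {0..<k}" using b by (auto simp: PiE_def)
      fix i assume "i \<in> {0..<k}"
      then show "a i = b i" using eq by (metis atLeastLessThan_iff map_eq_conv set_upt)
    qed
  qed
  have img: "?f ` ?P = permutations_of_set S"
  proof
    show "?f ` ?P \<subseteq> permutations_of_set S"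
      by (auto simp: permutations_of_set_def distinct_map)
    show "permutations_of_set S \<subseteq> ?f ` ?P"
    proof
      fix xs assume xs: "xs \<in> permutations_of_set S"
      then have sx: "set xs = S" "distinct xs" by (auto simp: permutations_of_set_def)
      then have lx: "length xs = k" using assms distinct_card by fastforce
      define \<phi> where "\<phi> = restrict (\<lambda>i. xs ! i) {0..<k}"
      have fx: "?f \<phi> = xs" unfolding \<phi>_def using lx by (simp add: map_nth list_eq_iff_nth_eq)
      have pP: "\<phi> \<in> ?P"
      proof -
        have im: "\<phi> ` {0..<k} = S" unfolding \<phi>_def using sx lx by (auto simp: set_conv_nth)
        have ij: "inj_on \<phi> {0..<k}" unfolding \<phi>_def using sx lx
          by (auto simp: inj_on_def nth_eq_iff_index_eq)
        have "\<forall>i<k. xs!i \<in> V" using sx lx assms(3) nth_mem by blast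
        then have pe: "\<phi> \<in> {0..<k} \<rightarrow>\<^sub>E V" unfolding \<phi>_def by auto
        show ?thesis using im pe ij by simp
      qed
      show "xs \<in> ?f ` ?P" by (rule image_eqI[where x=\<phi>]) (use pP fx in simp_all)
    qed
  qed
  have "card ?P = card (permutations_of_set S)" using card_image[OF inj] img by simp
  also have "\<dots> = fact k" using assms by simp
  finally show ?thesis .
qed


lemma finite_r_subsets: "finite (r_subsets {0..<n} r)"
  unfolding r_subsets_def by (simp add: finite_Collect_subsets)

lemma handshake:
  assumes "G \<subseteq> r_subsets {0..<n} r"
  shows "(\<Sum>v\<in>{0..<n}. hdeg G v) = r * card G"
proof -
  have fG: "finite G" using finite_subset[OF assms finite_r_subsets] .
  have "(\<Sum>v\<in>{0..<n}. hdeg G v) = (\<Sum>v\<in>{0..<n}. \<Sum>f\<in>G. if v \<in> f then 1 else 0)"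
    unfolding hdeg_def using fG by (simp add: sum.If_cases Int_def conj_commute)
  also have "\<dots> = (\<Sum>f\<in>G. \<Sum>v\<in>{0..<n}. if v \<in> f then 1 else 0)" by (rule sum.swap)
  also have "\<dots> = (\<Sum>f\<in>G. r)"
  proof (rule sum.cong)
    fix f assume "f \<in> G"
    then have "f \<subseteq> {0..<n}" "card f = r" using assms unfolding r_subsets_def by auto
    then show "(\<Sum>v\<in>{0..<n}. if v \<in> f then 1 else 0) = r"
      by (simp add: sum.If_cases Int_absorb1 inf.absorb2)
  qed simp
  finally show ?thesis by simp
qed

lemma hdeg_union_le: "finite A \<Longrightarrow> finite B \<Longrightarrow> card {g \<in> A \<union> B. v \<in> g} \<le> hdeg A v + hdeg B v"
  unfolding hdeg_def by (rule order.trans[OF _ card_Un_le]) (auto intro: card_mono)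

lemma card_PiE_upd:
  assumes "finite I" "j \<in> I"
  shows "card (PiE I (F(j:=A))) = card A * (\<Prod>l\<in>I - {j}. card (F l))"
proof -
  have "card (PiE I (F(j:=A))) = (\<Prod>l\<in>I. card ((F(j:=A)) l))" using assms by (simp add: card_PiE)
  also have "\<dots> = card A * (\<Prod>l\<in>I - {j}. card ((F(j:=A)) l))"
    using assms by (simp add: prod.remove)
  also have "(\<Prod>l\<in>I - {j}. card ((F(j:=A)) l)) = (\<Prod>l\<in>I - {j}. card (F l))"
    by (rule prod.cong) auto
  finally show ?thesis .
qed

lemma PiE_mono_sub: "(\<And>l. l \<in> I \<Longrightarrow> F l \<subseteq> F' l) \<Longrightarrow> PiE I F \<subseteq> PiE I F'"
  by (auto simp: PiE_def Pi_def)

lemma pow_diff_le: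
  fixes x y :: real
  assumes "0 \<le> y" "y \<le> x"
  shows "x ^ k - y ^ k \<le> real k * x ^ (k - 1) * (x - y)"
proof (induction k)
  case 0 then show ?case by simp
next
  case (Suc k)
  have "x ^ Suc k - y ^ Suc k = x * (x ^ k - y ^ k) + y ^ k * (x - y)" by (simp add: algebra_simps)
  also have "\<dots> \<le> x * (real k * x ^ (k - 1) * (x - y)) + x ^ k * (x - y)"
  proof (rule add_mono)
    show "x * (x ^ k - y ^ k) \<le> x * (real k * x ^ (k - 1) * (x - y))"
      using Suc.IH assms by (intro mult_left_mono) auto
    show "y ^ k * (x - y) \<le> x ^ k * (x - y)"
      using assms by (intro mult_right_mono power_mono) auto
  qed
  also have "\<dots> = real (Suc k) * x ^ k * (x - y)"
  proof (cases k)
    case 0 then show ?thesis by simp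
  next
    case (Suc k') then show ?thesis by (simp add: algebra_simps)
  qed
  finally show ?case by simp
qed

lemma eps_identity:
  fixes f n d h D r a K :: real and k :: nat
  assumes "n > 0" "d > 0" "a = f * n * d" "K = r * (r * f) * d" "k \<ge> 1"
  shows "a ^ k - real k * a ^ (k - 1) * (r * f * h) - (real k + real k * real k) * K * a ^ (k - 1)
        - r * (d + D) * K ^ k
       = a ^ k * (1 - (real k * r * h / (n * d) + (real k + real k * real k) * r ^ 2 / n
                      + r ^ (2 * k + 1) * (d + D) / n ^ k))"
proof -
  have ak: "a ^ k = a * a ^ (k - 1)" using assms(5) by (cases k) auto
  have Kk: "K ^ k = a ^ k * r ^ (2 * k) / n ^ k"
  proof -
    have "K = a * r ^ 2 / n" using assms by (simp add: field_simps power2_eq_square)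
    then show ?thesis by (simp add: power_divide power_mult_distrib power_mult)
  qed
  have "a ^ k * (real k * r * h / (n * d)) = real k * a ^ (k - 1) * (r * f * h)"
    unfolding ak using assms by (simp add: field_simps)
  moreover have "a ^ k * ((real k + real k * real k) * r ^ 2 / n) = (real k + real k * real k) * K * a ^ (k - 1)"
    unfolding ak using assms by (simp add: field_simps power2_eq_square)
  moreover have "a ^ k * (r ^ (2 * k + 1) * (d + D) / n ^ k) = r * (d + D) * K ^ k"
    unfolding Kk using assms by (simp add: field_simps)
  ultimately show ?thesis by (simp add: algebra_simps)
qed


locale swc =
  fixes r n d :: nat and H H' :: "nat set set" and e :: "nat set" and x :: "nat \<Rightarrow> nat"
  assumes r2: "r \<ge> 2"
  and HV: "H \<subseteq> r_subsets {0..<n} r" and H'V: "H' \<subseteq> r_subsets {0..<n} r"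
  and eV: "e \<in> r_subsets {0..<n} r" and eH: "e \<notin> H" and eH': "e \<notin> H'"
  and xbij: "bij_betw x {0..<r} e"
begin

abbreviation "m \<equiv> r - 1"
abbreviation "V \<equiv> {0..<n}"
definition "Row = {0..<r} \<rightarrow>\<^sub>E V"
definition "Bij S = {\<phi> \<in> Row. inj_on \<phi> {0..<r} \<and> \<phi> ` {0..<r} = S}"
definition "RowG G = {\<phi> \<in> Row. inj_on \<phi> {0..<r} \<and> \<phi> ` {0..<r} \<in> G - H}"
definition "RowMeet G S = {\<phi> \<in> RowG G. \<phi> ` {0..<r} \<inter> S \<noteq> {}}"

lemma finite_Row: "finite Row" unfolding Row_def by (simp add: finite_PiE)
lemma finite_RowG: "finite (RowG G)" unfolding RowG_def using finite_Row by simp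
lemma finite_RowMeet: "finite (RowMeet G S)" unfolding RowMeet_def using finite_RowG by simp

lemma card_Bij: "S \<in> r_subsets V r \<Longrightarrow> card (Bij S) = fact r"
  unfolding Bij_def Row_def r_subsets_def
  by (rule card_bij_ext) (auto intro: finite_subset)

lemma card_RowG:
  assumes "G \<subseteq> r_subsets V r"
  shows "card (RowG G) = fact r * card (G - H)"
proof -
  have fG: "finite G" using finite_subset[OF assms finite_r_subsets] .
  have "RowG G = (\<Union>S\<in>G - H. Bij S)" unfolding RowG_def Bij_def by auto
  moreover have "card (\<Union>S\<in>G - H. Bij S) = (\<Sum>S\<in>G - H. card (Bij S))"
    by (rule card_UN_disjoint) (use fG finite_Row in \<open>auto simp: Bij_def\<close>)
  moreover have "(\<Sum>S\<in>G - H. card (Bij S)) = (\<Sum>S\<in>G - H. fact r)"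
    using assms card_Bij by (intro sum.cong) auto
  ultimately show ?thesis by simp
qed

lemma card_RowHit:
  assumes "G \<subseteq> r_subsets V r"
  shows "card {\<phi> \<in> RowG G. v \<in> \<phi> ` {0..<r}} \<le> fact r * hdeg G v"
proof -
  have fG: "finite G" using finite_subset[OF assms finite_r_subsets] .
  have "{\<phi> \<in> RowG G. v \<in> \<phi> ` {0..<r}} \<subseteq> (\<Union>S\<in>{f\<in>G. v \<in> f}. Bij S)"
    unfolding RowG_def Bij_def by auto
  then have "card {\<phi> \<in> RowG G. v \<in> \<phi> ` {0..<r}} \<le> card (\<Union>S\<in>{f\<in>G. v \<in> f}. Bij S)"
    by (intro card_mono) (use fG finite_Row in \<open>auto simp: Bij_def\<close>)
  also have "\<dots> \<le> (\<Sum>S\<in>{f\<in>G. v \<in> f}. card (Bij S))" by (rule card_UN_le) (use fG in auto)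
  also have "\<dots> = (\<Sum>S\<in>{f\<in>G. v \<in> f}. fact r)"
    using assms card_Bij by (intro sum.cong) auto
  finally show ?thesis unfolding hdeg_def by (simp add: mult.commute)
qed

lemma card_RowMeet:
  assumes "G \<subseteq> r_subsets V r" "finite S" "\<And>v. v \<in> S \<Longrightarrow> hdeg G v \<le> d"
  shows "card (RowMeet G S) \<le> card S * fact r * d"
proof -
  have "RowMeet G S \<subseteq> (\<Union>v\<in>S. {\<phi> \<in> RowG G. v \<in> \<phi> ` {0..<r}})"
    unfolding RowMeet_def by auto
  then have "card (RowMeet G S) \<le> card (\<Union>v\<in>S. {\<phi> \<in> RowG G. v \<in> \<phi> ` {0..<r}})"
    by (intro card_mono) (use assms(2) finite_RowG in auto)
  also have "\<dots> \<le> (\<Sum>v\<in>S. card {\<phi> \<in> RowG G. v \<in> \<phi> ` {0..<r}})" by (rule card_UN_le) (use assms in auto)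
  also have "\<dots> \<le> (\<Sum>v\<in>S. fact r * d)"
  proof (rule sum_mono)
    fix v assume "v \<in> S"
    then show "card {\<phi> \<in> RowG G. v \<in> \<phi> ` {0..<r}} \<le> fact r * d"
      using card_RowHit[OF assms(1), of v] assms(3)[of v] by (meson le_trans mult_le_mono2)
  qed
  finally show ?thesis by (simp add: mult.assoc)
qed


definition "D G = PiE {0..<m} (\<lambda>_. RowG G)"
definition "col i Y = insert (x i) ((\<lambda>j. Y j i) ` {0..<m})"
definition "rows Y = (\<lambda>j. Y j ` {0..<r}) ` {0..<m}"
definition "cols Y = (\<lambda>i. col i Y) ` {0..<r}"
definition "sw G Y = (G - insert e (rows Y)) \<union> cols Y"
definition "good G Y \<longleftrightarrow> (\<forall>j<m. \<forall>i<r. Y j i \<notin> e) \<and>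
   (\<forall>j<m. \<forall>k<m. j \<noteq> k \<longrightarrow> Y j ` {0..<r} \<inter> Y k ` {0..<r} = {}) \<and>
   (\<forall>i<r. col i Y \<notin> G \<and> col i Y \<notin> H')"
definition "Fwd G = {Y \<in> D G. good G Y}"
definition "Bwd G = {Y \<in> PiE {0..<m} (\<lambda>_. Row). \<forall>i<r. inj_on (\<lambda>j. Y j i) {0..<m} \<and>
   x i \<notin> (\<lambda>j. Y j i) ` {0..<m} \<and> col i Y \<in> G}"
definition "CC = cond_graphs r n d H H'"
definition "AA = {G \<in> CC. e \<in> G}"
definition "BB = {G \<in> CC. e \<notin> G}"

lemma x_in: "i < r \<Longrightarrow> x i \<in> e" using xbij by (auto simp: bij_betw_def)
lemma x_inj: "i < r \<Longrightarrow> i' < r \<Longrightarrow> x i = x i' \<Longrightarrow> i = i'"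
  using xbij by (auto simp: bij_betw_def inj_on_def)
lemma e_x: "v \<in> e \<Longrightarrow> \<exists>i<r. v = x i" using xbij by (auto simp: bij_betw_def)
lemma eV': "e \<subseteq> V" "card e = r" using eV by (auto simp: r_subsets_def)

context
  fixes G Y assumes GA: "G \<in> AA" and YF: "Y \<in> Fwd G"
begin

lemma G_props: "G \<subseteq> r_subsets V r" "\<And>v. v \<in> V \<Longrightarrow> hdeg G v = d" "H \<subseteq> G" "H' \<inter> G = {}" "e \<in> G"
  using GA by (auto simp: AA_def CC_def cond_graphs_def regular_graphs_def)

lemma Y_row: "j < m \<Longrightarrow> inj_on (Y j) {0..<r} \<and> Y j ` {0..<r} \<in> G - H \<and> Y j \<in> Row"
  using YF by (auto simp: Fwd_def D_def RowG_def)

lemma Y_ext: "Y \<in> PiE {0..<m} (\<lambda>_. Row)"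
  using YF by (auto simp: Fwd_def D_def RowG_def)

lemma Y_V: "j < m \<Longrightarrow> i < r \<Longrightarrow> Y j i \<in> V"
  using Y_row[of j] by (auto simp: Row_def)

lemma Y_good: "good G Y" using YF by (simp add: Fwd_def)

lemma Y_ne: "j < m \<Longrightarrow> i < r \<Longrightarrow> Y j i \<notin> e"
  using Y_good by (simp add: good_def)

lemma Y_dist: "j < m \<Longrightarrow> k < m \<Longrightarrow> i < r \<Longrightarrow> l < r \<Longrightarrow> Y j i = Y k l \<Longrightarrow> j = k \<and> i = l"
proof -
  assume a: "j < m" "k < m" "i < r" "l < r" "Y j i = Y k l"
  have "j = k"
  proof (rule ccontr)
    assume "j \<noteq> k"
    then have "Y j ` {0..<r} \<inter> Y k ` {0..<r} = {}" using Y_good a by (simp add: good_def)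
    moreover have "Y j i \<in> Y j ` {0..<r}" using a(3) by simp
    moreover have "Y j i \<in> Y k ` {0..<r}" unfolding a(5) using a(4) by simp
    ultimately show False by (metis IntI empty_iff)
  qed
  then show ?thesis using a Y_row[of j] by (auto simp: inj_on_def)
qed

lemma x_ne_Y: "j < m \<Longrightarrow> i < r \<Longrightarrow> l < r \<Longrightarrow> x l \<noteq> Y j i"
  using Y_ne x_in by metis

lemma x_notin_col: "i < r \<Longrightarrow> l < r \<Longrightarrow> x l \<notin> (\<lambda>j. Y j i) ` {0..<m}"
  using x_ne_Y by auto

lemma dummy: True by simp
lemma dummy2: "True"
proof -
  show True by simp
qed

lemma col_nG: "i < r \<Longrightarrow> col i Y \<notin> G \<and> col i Y \<notin> H'"
  using Y_good by (simp add: good_def)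

lemma col_r: "i < r \<Longrightarrow> col i Y \<in> r_subsets V r"
proof -
  assume i: "i < r"
  have inj: "inj_on (\<lambda>j. Y j i) {0..<m}" using Y_dist i by (auto simp: inj_on_def)
  have nx: "x i \<notin> (\<lambda>j. Y j i) ` {0..<m}" using x_notin_col i by auto
  have "card (col i Y) = Suc m" unfolding col_def using card_image[OF inj] nx by simp
  also have "\<dots> = r" using r2 by simp
  moreover have "x i \<in> V" using x_in[OF i] eV'(1) by auto
  ultimately show ?thesis unfolding r_subsets_def col_def using Y_V i by auto
qed

lemma col_inj: "i < r \<Longrightarrow> i' < r \<Longrightarrow> col i Y = col i' Y \<Longrightarrow> i = i'"
proof -
  assume a: "i < r" "i' < r" "col i Y = col i' Y"
  then have "x i \<in> col i' Y" unfolding col_def by auto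
  then show "i = i'" unfolding col_def using a x_notin_col x_inj by auto
qed

lemma col_ne_e: "i < r \<Longrightarrow> col i Y \<noteq> e"
proof
  assume a: "i < r" "col i Y = e"
  have "Y 0 i \<in> col i Y" unfolding col_def using r2 by auto
  then show False using a Y_ne[of 0 i] r2 by auto
qed

lemma rows_sub: "insert e (rows Y) \<subseteq> G"
  using G_props Y_row unfolding rows_def by auto

lemma cols_disj: "cols Y \<inter> G = {}"
  using col_nG unfolding cols_def by auto

lemma sw_recover: "G = (sw G Y - cols Y) \<union> insert e (rows Y)"
  using rows_sub cols_disj unfolding sw_def by blast

lemma Rm_e: "v \<in> e \<Longrightarrow> {f \<in> insert e (rows Y). v \<in> f} = {e}"
  unfolding rows_def using Y_ne by auto

lemma Rm_Y: assumes "j < m" "i < r" shows "{f \<in> insert e (rows Y). Y j i \<in> f} = {Y j ` {0..<r}}"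
proof (rule set_eqI, rule iffI)
  fix f assume f: "f \<in> {f \<in> insert e (rows Y). Y j i \<in> f}"
  then have "f = e \<or> (\<exists>k<m. f = Y k ` {0..<r})" unfolding rows_def by auto
  moreover have "f \<noteq> e" using f Y_ne assms by auto
  ultimately obtain k where k: "k < m" "f = Y k ` {0..<r}" by auto
  then obtain l where "l < r" "Y j i = Y k l" using f by auto
  then have "k = j" using Y_dist assms k by metis
  then show "f \<in> {Y j ` {0..<r}}" using k by simp
next
  fix f assume "f \<in> {Y j ` {0..<r}}"
  then show "f \<in> {f \<in> insert e (rows Y). Y j i \<in> f}" unfolding rows_def using assms by auto
qed

lemma Rm_none: assumes "v \<notin> e" "\<forall>j<m. \<forall>i<r. v \<noteq> Y j i" shows "{f \<in> insert e (rows Y). v \<in> f} = {}"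
proof -
  have "v \<notin> Y j ` {0..<r}" if "j < m" for j using assms(2) that by fastforce
  then show ?thesis unfolding rows_def using assms(1) by force
qed

lemma Ad_e: assumes "i < r" shows "{f \<in> cols Y. x i \<in> f} = {col i Y}"
proof (rule set_eqI, rule iffI)
  fix f assume f: "f \<in> {f \<in> cols Y. x i \<in> f}"
  then obtain l where l: "l < r" "f = col l Y" unfolding cols_def by auto
  then have "x i = x l" using f x_notin_col[OF l(1) assms] unfolding col_def by auto
  then have "l = i" using x_inj assms l by metis
  then show "f \<in> {col i Y}" using l by simp
next
  fix f assume "f \<in> {col i Y}"
  then show "f \<in> {f \<in> cols Y. x i \<in> f}" unfolding cols_def col_def using assms by auto
qed

lemma Ad_Y: assumes "j < m" "i < r" shows "{f \<in> cols Y. Y j i \<in> f} = {col i Y}"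
proof (rule set_eqI, rule iffI)
  fix f assume f: "f \<in> {f \<in> cols Y. Y j i \<in> f}"
  then obtain l where l: "l < r" "f = col l Y" unfolding cols_def by auto
  have "Y j i \<noteq> x l" using x_ne_Y assms l by metis
  then obtain k where "k < m" "Y j i = Y k l" using f l unfolding col_def by auto
  then have "l = i" using Y_dist assms l by metis
  then show "f \<in> {col i Y}" using l by simp
next
  fix f assume "f \<in> {col i Y}"
  then show "f \<in> {f \<in> cols Y. Y j i \<in> f}" unfolding cols_def col_def using assms by auto
qed

lemma Ad_none: assumes "v \<notin> e" "\<forall>j<m. \<forall>i<r. v \<noteq> Y j i" shows "{f \<in> cols Y. v \<in> f} = {}"
proof -
  have "v \<notin> col i Y" if "i < r" for i using assms x_in[OF that] that unfolding col_def by auto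
  then show ?thesis unfolding cols_def by force
qed

lemma Rm_Ad: "card {f \<in> insert e (rows Y). v \<in> f} = card {f \<in> cols Y. v \<in> f}"
proof (cases "v \<in> e")
  case True
  then obtain i where "i < r" "v = x i" using e_x by blast
  then show ?thesis using Rm_e[OF True] Ad_e by simp
next
  case False
  show ?thesis
  proof (cases "\<exists>j<m. \<exists>i<r. v = Y j i")
    case True
    then obtain j i where "j < m" "i < r" "v = Y j i" by blast
    then show ?thesis using Rm_Y Ad_Y by simp
  next
    case F2: False
    then have nn: "\<forall>j<m. \<forall>i<r. v \<noteq> Y j i" by blast
    show ?thesis unfolding Rm_none[OF \<open>v \<notin> e\<close> nn] Ad_none[OF \<open>v \<notin> e\<close> nn] by simp
  qed
qed

lemma finG: "finite G" using finite_subset[OF G_props(1) finite_r_subsets] .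

lemma sw_deg: "v \<in> V \<Longrightarrow> hdeg (sw G Y) v = d"
proof -
  assume v: "v \<in> V"
  let ?Rm = "insert e (rows Y)"
  have fc: "finite (cols Y)" unfolding cols_def by simp
  have "{f \<in> sw G Y. v \<in> f} = ({f \<in> G. v \<in> f} - {f \<in> ?Rm. v \<in> f}) \<union> {f \<in> cols Y. v \<in> f}"
    unfolding sw_def by auto
  moreover have "card (({f \<in> G. v \<in> f} - {f \<in> ?Rm. v \<in> f}) \<union> {f \<in> cols Y. v \<in> f})
     = card ({f \<in> G. v \<in> f} - {f \<in> ?Rm. v \<in> f}) + card {f \<in> cols Y. v \<in> f}"
    by (rule card_Un_disjoint) (use finG fc cols_disj in auto)
  moreover have "card ({f \<in> G. v \<in> f} - {f \<in> ?Rm. v \<in> f}) = card {f \<in> G. v \<in> f} - card {f \<in> ?Rm. v \<in> f}"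
    by (rule card_Diff_subset) (use rows_sub finG in \<open>auto intro: finite_subset\<close>)
  moreover have "card {f \<in> ?Rm. v \<in> f} \<le> card {f \<in> G. v \<in> f}"
    by (rule card_mono) (use finG rows_sub in auto)
  ultimately have "hdeg (sw G Y) v = hdeg G v" unfolding hdeg_def using Rm_Ad[of v] by simp
  then show ?thesis using G_props(2) v by simp
qed

lemma sw_BB: "sw G Y \<in> BB"
proof -
  have "sw G Y \<subseteq> r_subsets V r" unfolding sw_def cols_def using G_props col_r by auto
  moreover have "H \<subseteq> sw G Y" unfolding sw_def using G_props eH Y_row unfolding rows_def by auto
  moreover have "H' \<inter> sw G Y = {}" unfolding sw_def cols_def using G_props col_nG by auto
  moreover have "e \<notin> cols Y" using col_ne_e unfolding cols_def by force
  then have "e \<notin> sw G Y" unfolding sw_def by auto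
  ultimately show ?thesis using sw_deg
    by (auto simp: BB_def CC_def cond_graphs_def regular_graphs_def)
qed

lemma sw_Bwd: "Y \<in> Bwd (sw G Y)"
proof -
  have "\<forall>i<r. inj_on (\<lambda>j. Y j i) {0..<m} \<and> x i \<notin> (\<lambda>j. Y j i) ` {0..<m} \<and> col i Y \<in> sw G Y"
  proof (intro allI impI conjI)
    fix i assume i: "i < r"
    show "inj_on (\<lambda>j. Y j i) {0..<m}" using Y_dist i by (auto simp: inj_on_def)
    show "x i \<notin> (\<lambda>j. Y j i) ` {0..<m}" using x_notin_col i by blast
    have "col i Y \<in> cols Y" unfolding cols_def using i by simp
    then show "col i Y \<in> sw G Y" unfolding sw_def by simp
  qed
  then show ?thesis using Y_ext unfolding Bwd_def by blast
qed

end

definition "CB G i = {\<psi> \<in> {0..<m} \<rightarrow>\<^sub>E V. inj_on \<psi> {0..<m} \<and> x i \<notin> \<psi> ` {0..<m} \<and> insert (x i) (\<psi> ` {0..<m}) \<in> G}"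

lemma finite_CC: "finite CC"
proof -
  have "CC \<subseteq> Pow (r_subsets V r)" unfolding CC_def cond_graphs_def regular_graphs_def by auto
  then show ?thesis using finite_r_subsets by (meson finite_Pow_iff finite_subset)
qed

lemma card_CB:
  assumes "G \<subseteq> r_subsets V r" "i < r"
  shows "card (CB G i) \<le> fact m * hdeg G (x i)"
proof -
  have fG: "finite G" using finite_subset[OF assms(1) finite_r_subsets] .
  let ?B = "\<lambda>g. {\<psi> \<in> {0..<m} \<rightarrow>\<^sub>E V. inj_on \<psi> {0..<m} \<and> \<psi> ` {0..<m} = g - {x i}}"
  have "CB G i \<subseteq> (\<Union>g\<in>{f\<in>G. x i \<in> f}. ?B g)"
    unfolding CB_def by auto
  have fB: "finite (?B g)" for g
    by (rule finite_subset[OF _ finite_PiE[of "{0..<m}" "\<lambda>_. V"]]) auto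
  have "card (CB G i) \<le> card (\<Union>g\<in>{f\<in>G. x i \<in> f}. ?B g)"
    by (rule card_mono) (use fG fB \<open>CB G i \<subseteq> _\<close> in auto)
  also have "\<dots> \<le> (\<Sum>g\<in>{f\<in>G. x i \<in> f}. card (?B g))" by (rule card_UN_le) (use fG in auto)
  also have "\<dots> = (\<Sum>g\<in>{f\<in>G. x i \<in> f}. fact m)"
  proof (rule sum.cong)
    fix g assume g: "g \<in> {f\<in>G. x i \<in> f}"
    then have "g \<subseteq> V" "card g = r" "finite g" using assms(1) unfolding r_subsets_def
      by (auto intro: finite_subset)
    then show "card (?B g) = fact m" using g by (intro card_bij_ext) auto
  qed simp
  finally show ?thesis unfolding hdeg_def by (simp add: mult.commute)
qed

lemma card_Bwd:
  assumes "G \<in> BB"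
  shows "card (Bwd G) \<le> (fact m * d) ^ r"
proof -
  have Gp: "G \<subseteq> r_subsets V r" "\<And>v. v \<in> V \<Longrightarrow> hdeg G v = d"
    using assms by (auto simp: BB_def CC_def cond_graphs_def regular_graphs_def)
  let ?T = "\<lambda>Y. \<lambda>i\<in>{0..<r}. \<lambda>j\<in>{0..<m}. Y j i"
  have inj: "inj_on ?T (Bwd G)"
  proof (rule inj_onI)
    fix Y Z assume Y: "Y \<in> Bwd G" and Z: "Z \<in> Bwd G" and eq: "?T Y = ?T Z"
    have YZ: "\<forall>j<m. \<forall>i<r. Y j i = Z j i"
    proof (intro allI impI)
      fix j i assume "j < m" "i < r"
      then show "Y j i = Z j i" using fun_cong[OF fun_cong[OF eq, of i], of j] by simp
    qed
    have YP: "Y \<in> PiE {0..<m} (\<lambda>_. Row)" and ZP: "Z \<in> PiE {0..<m} (\<lambda>_. Row)"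
      using Y Z by (auto simp: Bwd_def)
    show "Y = Z"
    proof (rule PiE_ext[OF YP ZP])
      fix j assume j: "j \<in> {0..<m}"
      show "Y j = Z j"
        by (rule PiE_ext[of _ "{0..<r}" "\<lambda>_. V"]) (use Y Z j \<open>\<forall>j<m. \<forall>i<r. Y j i = Z j i\<close> in \<open>auto simp: Bwd_def Row_def\<close>)
    qed
  qed
  have sub: "?T ` (Bwd G) \<subseteq> PiE {0..<r} (CB G)"
  proof
    fix W assume "W \<in> ?T ` (Bwd G)"
    then obtain Y where Y: "Y \<in> Bwd G" and W: "W = ?T Y" by auto
    have "\<forall>i<r. (\<lambda>j\<in>{0..<m}. Y j i) \<in> CB G i"
    proof (intro allI impI)
      fix i assume i: "i < r"
      have "\<forall>j<m. Y j i \<in> V" using Y i by (auto simp: Bwd_def Row_def PiE_def Pi_def)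
      moreover have "(\<lambda>j\<in>{0..<m}. Y j i) ` {0..<m} = (\<lambda>j. Y j i) ` {0..<m}" by auto
      moreover have "inj_on (\<lambda>j\<in>{0..<m}. Y j i) {0..<m}"
        using Y i unfolding Bwd_def by (auto simp: inj_on_def)
      ultimately show "(\<lambda>j\<in>{0..<m}. Y j i) \<in> CB G i"
        using Y i unfolding CB_def Bwd_def col_def by auto
    qed
    then show "W \<in> PiE {0..<r} (CB G)" unfolding W by auto
  qed
  have fin: "finite (PiE {0..<r} (CB G))"
    by (rule finite_PiE) (auto simp: CB_def intro!: finite_PiE)
  have "card (Bwd G) = card (?T ` Bwd G)" using card_image[OF inj] by simp
  also have "\<dots> \<le> card (PiE {0..<r} (CB G))" by (rule card_mono[OF fin sub])
  also have "\<dots> = (\<Prod>i\<in>{0..<r}. card (CB G i))" by (simp add: card_PiE)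
  also have "\<dots> \<le> (\<Prod>i\<in>{0..<r}. fact m * d)"
  proof (rule prod_mono)
    fix i assume i: "i \<in> {0..<r}"
    then have "x i \<in> V" using x_in[of i] eV'(1) by auto
    then show "0 \<le> card (CB G i) \<and> card (CB G i) \<le> fact m * d"
      using card_CB[OF Gp(1), of i] i Gp(2) by auto
  qed
  finally show ?thesis by simp
qed

lemma double_count:
  shows "(\<Sum>G\<in>AA. card (Fwd G)) \<le> card BB * (fact m * d) ^ r"
proof -
  have fA: "finite AA" and fB: "finite BB" using finite_CC by (auto simp: AA_def BB_def)
  have fBwd: "finite (Bwd G)" for G
  proof -
    have "Bwd G \<subseteq> PiE {0..<m} (\<lambda>_. Row)" unfolding Bwd_def by auto
    then show ?thesis using finite_Row by (meson finite_PiE finite_atLeastLessThan finite_subset)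
  qed
  have fFwd: "finite (Fwd G)" for G
  proof -
    have "Fwd G \<subseteq> PiE {0..<m} (\<lambda>_. RowG G)" unfolding Fwd_def D_def by auto
    then show ?thesis using finite_RowG by (meson finite_PiE finite_atLeastLessThan finite_subset)
  qed
  let ?f = "\<lambda>(G, Y). (sw G Y, Y)"
  have inj: "inj_on ?f (Sigma AA Fwd)"
  proof (rule inj_onI)
    fix p q assume p: "p \<in> Sigma AA Fwd" and q: "q \<in> Sigma AA Fwd" and eq: "?f p = ?f q"
    obtain G Y where pG: "p = (G, Y)" "G \<in> AA" "Y \<in> Fwd G" using p by auto
    obtain G' Y' where qG: "q = (G', Y')" "G' \<in> AA" "Y' \<in> Fwd G'" using q by auto
    have "Y = Y'" "sw G Y = sw G' Y'" using eq pG qG by auto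
    then have "G = G'" using sw_recover[OF pG(2,3)] sw_recover[OF qG(2,3)] by simp
    then show "p = q" using pG qG \<open>Y = Y'\<close> by simp
  qed
  have sub: "?f ` Sigma AA Fwd \<subseteq> Sigma BB Bwd"
    using sw_BB sw_Bwd by auto
  have "(\<Sum>G\<in>AA. card (Fwd G)) = card (Sigma AA Fwd)" using card_SigmaI[OF fA, of Fwd] fFwd by simp
  also have "\<dots> = card (?f ` Sigma AA Fwd)" using card_image[OF inj] by simp
  also have "\<dots> \<le> card (Sigma BB Bwd)"
    by (rule card_mono[OF _ sub]) (use fB fBwd in auto)
  also have "\<dots> = (\<Sum>G\<in>BB. card (Bwd G))" using card_SigmaI[OF fB, of Bwd] fBwd by simp
  also have "\<dots> \<le> (\<Sum>G\<in>BB. (fact m * d) ^ r)" by (rule sum_mono) (rule card_Bwd)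
  finally show ?thesis by simp
qed


abbreviation "Dl \<equiv> maxdeg n H'"

lemma hdeg_le_maxdeg: "v \<in> V \<Longrightarrow> hdeg H' v \<le> Dl"
  unfolding maxdeg_def by (rule Max_ge) auto

lemma finite_H': "finite H'" using finite_subset[OF H'V finite_r_subsets] .

context
  fixes G assumes GA: "G \<in> AA"
begin

lemma GP: "G \<subseteq> r_subsets V r" "\<And>v. v \<in> V \<Longrightarrow> hdeg G v = d" "H \<subseteq> G" "H' \<inter> G = {}" "e \<in> G"
  using GA by (auto simp: AA_def CC_def cond_graphs_def regular_graphs_def)

lemma finG': "finite G" using finite_subset[OF GP(1) finite_r_subsets] .

abbreviation "RR \<equiv> card (RowG G)"
abbreviation "KK \<equiv> r * fact r * d"

lemma RowMeet_le: "S \<in> r_subsets V r \<Longrightarrow> card (RowMeet G S) \<le> KK"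
proof -
  assume S: "S \<in> r_subsets V r"
  then have "finite S" "card S = r" "S \<subseteq> V" unfolding r_subsets_def by (auto intro: finite_subset)
  moreover have "\<And>v. v \<in> S \<Longrightarrow> hdeg G v \<le> d" using GP(2) \<open>S \<subseteq> V\<close> by auto
  ultimately have "card (RowMeet G S) \<le> card S * fact r * d" using card_RowMeet[OF GP(1)] by blast
  then show ?thesis unfolding \<open>card S = r\<close> .
qed

lemma row_img: "\<phi> \<in> RowG G \<Longrightarrow> \<phi> ` {0..<r} \<in> r_subsets V r"
  unfolding RowG_def Row_def r_subsets_def by (auto simp: card_image PiE_def Pi_def)

definition "bad1 = (\<Union>j\<in>{0..<m}. PiE {0..<m} ((\<lambda>_. RowG G)(j := RowMeet G e)))"
definition "PP = {p \<in> {0..<m} \<times> {0..<m}. fst p \<noteq> snd p}"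
definition "bad2p j k = (\<Union>\<phi>\<in>RowG G. PiE {0..<m} (((\<lambda>_. RowG G)(j := {\<phi>}))(k := RowMeet G (\<phi> ` {0..<r}))))"
definition "bad2 = (\<Union>p\<in>PP. bad2p (fst p) (snd p))"
definition "bad3 = (\<Union>i\<in>{0..<r}. \<Union>g\<in>{g \<in> G \<union> H'. x i \<in> g}. PiE {0..<m} (\<lambda>_. RowMeet G g))"

lemma D_sub: "D G \<subseteq> Fwd G \<union> (bad1 \<union> bad2 \<union> bad3)"
proof
  fix Y assume YD: "Y \<in> D G"
  have Yr: "Y j \<in> RowG G" if "j < m" for j using YD that by (auto simp: D_def)
  have Yext: "Y \<in> extensional {0..<m}" using YD by (auto simp: D_def PiE_def)
  show "Y \<in> Fwd G \<union> (bad1 \<union> bad2 \<union> bad3)"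
  proof (cases "good G Y")
    case True then show ?thesis using YD by (simp add: Fwd_def)
  next
    case False
    then consider (c1) "\<exists>j<m. \<exists>i<r. Y j i \<in> e"
      | (c2) "\<exists>j<m. \<exists>k<m. j \<noteq> k \<and> Y j ` {0..<r} \<inter> Y k ` {0..<r} \<noteq> {}"
      | (c3) "\<exists>i<r. col i Y \<in> G \<or> col i Y \<in> H'"
      unfolding good_def by blast
    then show ?thesis
    proof cases
      case c1
      then obtain j i where ji: "j < m" "i < r" "Y j i \<in> e" by blast
      have "Y j i \<in> Y j ` {0..<r}" using ji by simp
      then have "Y j ` {0..<r} \<inter> e \<noteq> {}" using ji(3) by blast
      then have "Y j \<in> RowMeet G e" using Yr[OF ji(1)] unfolding RowMeet_def by auto
      then have "Y \<in> PiE {0..<m} ((\<lambda>_. RowG G)(j := RowMeet G e))"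
        using Yr Yext by (auto simp: PiE_iff)
      then show ?thesis using ji unfolding bad1_def by auto
    next
      case c2
      then obtain j k where jk: "j < m" "k < m" "j \<noteq> k" "Y j ` {0..<r} \<inter> Y k ` {0..<r} \<noteq> {}" by blast
      have "Y k \<in> RowMeet G (Y j ` {0..<r})" using Yr[OF jk(2)] jk(4) unfolding RowMeet_def by auto
      then have "Y \<in> PiE {0..<m} (((\<lambda>_. RowG G)(j := {Y j}))(k := RowMeet G (Y j ` {0..<r})))"
        using Yr Yext by (auto simp: PiE_iff)
      then have "Y \<in> bad2p j k" unfolding bad2p_def using Yr[OF jk(1)] by blast
      moreover have "(j, k) \<in> PP" unfolding PP_def using jk by auto
      ultimately show ?thesis unfolding bad2_def by force
    next
      case c3
      then obtain i where i: "i < r" "col i Y \<in> G \<union> H'" by blast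
      have "Y j \<in> RowMeet G (col i Y)" if "j < m" for j
      proof -
        have "Y j i \<in> Y j ` {0..<r}" using i by simp
        moreover have "Y j i \<in> col i Y" unfolding col_def using that by simp
        ultimately have "Y j ` {0..<r} \<inter> col i Y \<noteq> {}" by blast
        then show ?thesis using Yr[OF that] unfolding RowMeet_def by simp
      qed
      then have YP: "Y \<in> PiE {0..<m} (\<lambda>_. RowMeet G (col i Y))" using Yext by (auto simp: PiE_iff)
      have "x i \<in> col i Y" unfolding col_def by simp
      then have cm: "col i Y \<in> {g \<in> G \<union> H'. x i \<in> g}" using i by simp
      have "Y \<in> bad3" unfolding bad3_def
      proof (rule UN_I[of i])
        show "i \<in> {0..<r}" using i by simp
        show "Y \<in> (\<Union>g\<in>{g \<in> G \<union> H'. x i \<in> g}. PiE {0..<m} (\<lambda>_. RowMeet G g))"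
          apply (rule UN_I[where a="col i Y"])
           apply (rule cm)
          using YP by simp
      qed
      then show ?thesis by simp
    qed
  qed
qed

lemma card_D: "card (D G) = RR ^ m" unfolding D_def by (simp add: card_PiE)

lemma card_bad1: "card bad1 \<le> m * (KK * RR ^ (m - 1))"
proof -
  have "card bad1 \<le> (\<Sum>j\<in>{0..<m}. card (PiE {0..<m} ((\<lambda>_. RowG G)(j := RowMeet G e))))"
    unfolding bad1_def by (rule card_UN_le) simp
  also have "\<dots> \<le> (\<Sum>j\<in>{0..<m}. KK * RR ^ (m - 1))"
  proof (rule sum_mono)
    fix j assume j: "j \<in> {0..<m}"
    have "card (PiE {0..<m} ((\<lambda>_. RowG G)(j := RowMeet G e))) = card (RowMeet G e) * RR ^ (m - 1)"
      using j by (simp add: card_PiE_upd)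
    also have "\<dots> \<le> KK * RR ^ (m - 1)" using RowMeet_le[OF eV] by simp
    finally show "card (PiE {0..<m} ((\<lambda>_. RowG G)(j := RowMeet G e))) \<le> KK * RR ^ (m - 1)" .
  qed
  finally show ?thesis by simp
qed

lemma card_bad2p: assumes "j < m" "k < m" "j \<noteq> k" shows "card (bad2p j k) \<le> KK * RR ^ (m - 1)"
proof -
  have "card (bad2p j k) \<le> (\<Sum>\<phi>\<in>RowG G. card (PiE {0..<m} (((\<lambda>_. RowG G)(j := {\<phi>}))(k := RowMeet G (\<phi> ` {0..<r})))))"
    unfolding bad2p_def by (rule card_UN_le) (rule finite_RowG)
  also have "\<dots> \<le> (\<Sum>\<phi>\<in>RowG G. KK * RR ^ (m - 2))"
  proof (rule sum_mono)
    fix \<phi> assume \<phi>: "\<phi> \<in> RowG G"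
    have "(\<Prod>l\<in>{0..<m} - {k}. card (((\<lambda>_. RowG G)(j := {\<phi>})) l))
       = card {\<phi>} * (\<Prod>l\<in>{0..<m} - {k} - {j}. card (((\<lambda>_. RowG G)(j := {\<phi>})) l))"
      using assms by (subst prod.remove[of _ j]) auto
    also have "(\<Prod>l\<in>{0..<m} - {k} - {j}. card (((\<lambda>_. RowG G)(j := {\<phi>})) l))
       = (\<Prod>l\<in>{0..<m} - {k} - {j}. RR)" by (rule prod.cong) auto
    also have "\<dots> = RR ^ (m - 2)" using assms by (simp add: card_Diff_singleton)
    finally have P: "(\<Prod>l\<in>{0..<m} - {k}. card (((\<lambda>_. RowG G)(j := {\<phi>})) l)) = RR ^ (m - 2)" by simp
    have "card (PiE {0..<m} (((\<lambda>_. RowG G)(j := {\<phi>}))(k := RowMeet G (\<phi> ` {0..<r}))))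
       = card (RowMeet G (\<phi> ` {0..<r})) * (\<Prod>l\<in>{0..<m} - {k}. card (((\<lambda>_. RowG G)(j := {\<phi>})) l))"
      using assms by (intro card_PiE_upd) auto
    also have "\<dots> = card (RowMeet G (\<phi> ` {0..<r})) * RR ^ (m - 2)" unfolding P ..
    also have "\<dots> \<le> KK * RR ^ (m - 2)" using RowMeet_le[OF row_img[OF \<phi>]] by simp
    finally show "card (PiE {0..<m} (((\<lambda>_. RowG G)(j := {\<phi>}))(k := RowMeet G (\<phi> ` {0..<r})))) \<le> KK * RR ^ (m - 2)" .
  qed
  also have "\<dots> = KK * (RR * RR ^ (m - 2))" by simp
  also have "RR * RR ^ (m - 2) = RR ^ (m - 1)"
  proof -
    have "m - 1 = Suc (m - 2)" using assms by linarith
    then show ?thesis by simp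
  qed
  finally show ?thesis .
qed

lemma card_bad2: "card bad2 \<le> m * m * (KK * RR ^ (m - 1))"
proof -
  have fP: "finite PP" unfolding PP_def by (rule finite_subset[of _ "{0..<m} \<times> {0..<m}"]) auto
  have "card bad2 \<le> (\<Sum>p\<in>PP. card (bad2p (fst p) (snd p)))"
    unfolding bad2_def by (rule card_UN_le[OF fP])
  also have "\<dots> \<le> (\<Sum>p\<in>PP. KK * RR ^ (m - 1))"
  proof (rule sum_mono)
    fix p assume "p \<in> PP"
    then have "fst p < m" "snd p < m" "fst p \<noteq> snd p" by (auto simp: PP_def)
    then show "card (bad2p (fst p) (snd p)) \<le> KK * RR ^ (m - 1)" by (rule card_bad2p)
  qed
  also have "\<dots> = card PP * (KK * RR ^ (m - 1))" by simp
  also have "card PP \<le> m * m"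
    using card_mono[of "{0..<m} \<times> {0..<m}" PP] by (auto simp: PP_def)
  finally show ?thesis by (simp add: mult_right_mono)
qed

lemma card_bad3: "card bad3 \<le> r * ((d + Dl) * KK ^ m)"
proof -
  have "card bad3 \<le> (\<Sum>i\<in>{0..<r}. card (\<Union>g\<in>{g \<in> G \<union> H'. x i \<in> g}. PiE {0..<m} (\<lambda>_. RowMeet G g)))"
    unfolding bad3_def by (rule card_UN_le) simp
  also have "\<dots> \<le> (\<Sum>i\<in>{0..<r}. (d + Dl) * KK ^ m)"
  proof (rule sum_mono)
    fix i assume i: "i \<in> {0..<r}"
    have xV: "x i \<in> V" using x_in[of i] eV'(1) i by auto
    have fE: "finite {g \<in> G \<union> H'. x i \<in> g}" using finG' finite_H' by simp
    have "card (\<Union>g\<in>{g \<in> G \<union> H'. x i \<in> g}. PiE {0..<m} (\<lambda>_. RowMeet G g))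
       \<le> (\<Sum>g\<in>{g \<in> G \<union> H'. x i \<in> g}. card (PiE {0..<m} (\<lambda>_. RowMeet G g)))"
      by (rule card_UN_le[OF fE])
    also have "\<dots> \<le> (\<Sum>g\<in>{g \<in> G \<union> H'. x i \<in> g}. KK ^ m)"
    proof (rule sum_mono)
      fix g assume "g \<in> {g \<in> G \<union> H'. x i \<in> g}"
      then have "g \<in> r_subsets V r" using GP(1) H'V by auto
      then show "card (PiE {0..<m} (\<lambda>_. RowMeet G g)) \<le> KK ^ m"
        using RowMeet_le by (simp add: card_PiE power_mono)
    qed
    also have "\<dots> = card {g \<in> G \<union> H'. x i \<in> g} * KK ^ m" by simp
    also have "card {g \<in> G \<union> H'. x i \<in> g} \<le> d + Dl"
      using hdeg_union_le[OF finG' finite_H', of "x i"] GP(2)[OF xV] hdeg_le_maxdeg[OF xV] by simp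
    finally show "card (\<Union>g\<in>{g \<in> G \<union> H'. x i \<in> g}. PiE {0..<m} (\<lambda>_. RowMeet G g)) \<le> (d + Dl) * KK ^ m"
      by (simp add: mult_right_mono)
  qed
  finally show ?thesis by simp
qed

lemma Fwd_lower:
  "real (card (Fwd G)) \<ge> real RR ^ m - real m * (real KK * real RR ^ (m - 1))
     - real m * real m * (real KK * real RR ^ (m - 1)) - real r * ((real d + real Dl) * real KK ^ m)"
proof -
  have fF: "finite (Fwd G)" unfolding Fwd_def D_def using finite_RowG by (simp add: finite_PiE)
  have fb1: "finite bad1" unfolding bad1_def using finite_RowG finite_RowMeet by (auto intro!: finite_PiE)
  have fb2: "finite bad2" unfolding bad2_def bad2p_def PP_def using finite_RowG finite_RowMeet
    by (auto intro!: finite_PiE finite_UN_I)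
  have fb3: "finite bad3" unfolding bad3_def using finite_RowMeet finG' finite_H' by (auto intro!: finite_PiE)
  have "card (D G) \<le> card (Fwd G \<union> (bad1 \<union> bad2 \<union> bad3))"
    by (rule card_mono) (use D_sub fF fb1 fb2 fb3 in auto)
  then have "RR ^ m \<le> card (Fwd G \<union> (bad1 \<union> bad2 \<union> bad3))" unfolding card_D .
  also have "\<dots> \<le> card (Fwd G) + card (bad1 \<union> bad2 \<union> bad3)" by (rule card_Un_le)
  also have "card (bad1 \<union> bad2 \<union> bad3) \<le> card (bad1 \<union> bad2) + card bad3" by (rule card_Un_le)
  also have "card (bad1 \<union> bad2) \<le> card bad1 + card bad2" by (rule card_Un_le)
  finally have "RR ^ m \<le> card (Fwd G) + (m * (KK * RR ^ (m - 1)) + m * m * (KK * RR ^ (m - 1)) + r * ((d + Dl) * KK ^ m))"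
    using card_bad1 card_bad2 card_bad3 by linarith
  then have "real (RR ^ m) \<le> real (card (Fwd G) + (m * (KK * RR ^ (m - 1)) + m * m * (KK * RR ^ (m - 1)) + r * ((d + Dl) * KK ^ m)))"
    by (simp only: of_nat_le_iff)
  then show ?thesis unfolding of_nat_mult of_nat_power of_nat_add by linarith
qed

lemma card_G: "real (card G) * real r = real n * real d"
proof -
  have "(\<Sum>v\<in>{0..<n}. hdeg G v) = r * card G" by (rule handshake[OF GP(1)])
  moreover have "(\<Sum>v\<in>{0..<n}. hdeg G v) = (\<Sum>v\<in>{0..<n}. d)" using GP(2) by (intro sum.cong) auto
  ultimately have "r * card G = n * d" by simp
  then have "real (r * card G) = real (n * d)" by simp
  then show ?thesis by (simp add: mult.commute)
qed

lemma RR_eq: "real RR = real (fact r) * (real (card G) - real (card H))"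
proof -
  have "card (G - H) = card G - card H" using GP(3) finG' by (simp add: card_Diff_subset finite_subset)
  moreover have "card H \<le> card G" using GP(3) finG' by (simp add: card_mono)
  ultimately show ?thesis using card_RowG[OF GP(1)] by (simp add: of_nat_diff)
qed

end

lemma n_pos: "n \<ge> 2"
proof -
  have "card e \<le> card {0..<n}" using eV' by (intro card_mono) auto
  then show ?thesis using eV' r2 by simp
qed

lemma AA_empty_d0: "d = 0 \<Longrightarrow> AA = {}"
proof (rule ccontr)
  assume d0: "d = 0" and ne: "AA \<noteq> {}"
  then obtain G where G: "G \<in> AA" by blast
  have x0: "x 0 \<in> e" using x_in r2 by simp
  then have "x 0 \<in> V" using eV' by auto
  then have "hdeg G (x 0) = 0" using GP(2)[OF G] d0 by simp
  moreover have "e \<in> {f \<in> G. x 0 \<in> f}" using GP(5)[OF G] x0 by simp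
  moreover have "finite {f \<in> G. x 0 \<in> f}" using finG'[OF G] by simp
  ultimately show False unfolding hdeg_def by (metis card_0_eq empty_iff)
qed

lemma CC_split: "card CC = card AA + card BB"
proof -
  have "CC = AA \<union> BB" "AA \<inter> BB = {}" unfolding AA_def BB_def by auto
  moreover have "finite AA" "finite BB" using finite_CC by (auto simp: AA_def BB_def)
  ultimately show ?thesis by (simp add: card_Un_disjoint)
qed

lemma prob_eq: "cond_prob r n d H H' e = real (card AA) / real (card CC)"
  unfolding cond_prob_def AA_def CC_def by simp

lemma core:
  fixes \<epsilon> :: real
  assumes eps: "\<epsilon> = real m * real r * real (card H) / (real n * real d)
              + (real m + real m * real m) * real r ^ 2 / real n
              + real r ^ (2 * m + 1) * (real d + real Dl) / real n ^ m"
  and small: "\<epsilon> \<le> 1 / 2"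
  shows "cond_prob r n d H H' e \<le> fact m * (real d / real n ^ m) * (1 + 2 * \<epsilon>)"
proof (cases "d = 0")
  case True
  then show ?thesis using AA_empty_d0 prob_eq by simp
next
  case False
  then have dpos: "real d > 0" by simp
  have npos: "real n > 0" using n_pos by simp
  have eps0: "\<epsilon> \<ge> 0" unfolding eps by (intro add_nonneg_nonneg divide_nonneg_nonneg) auto
  define a where "a = fact m * real n * real d"
  have apos: "a > 0" unfolding a_def using dpos npos by simp
  have factr: "(fact r :: real) = real r * fact m"
    using r2 fact_reduce[of r] by (simp add: of_nat_diff)
  have lowG: "real (card (Fwd G)) \<ge> a ^ m * (1 - \<epsilon>)" if G: "G \<in> AA" for G
  proof -
    have cG: "real (card G) * real r = real n * real d" by (rule card_G[OF G])
    have RRe: "real (card (RowG G)) = a - fact r * real (card H)"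
      using RR_eq[OF G] cG factr unfolding a_def by (simp add: algebra_simps)
    have hG: "fact r * real (card H) \<ge> 0" by simp
    have RRa: "real (card (RowG G)) \<le> a" using RRe hG by linarith
    have RR0: "real (card (RowG G)) \<ge> 0" by simp
    have p1: "a ^ m - real (card (RowG G)) ^ m \<le> real m * a ^ (m - 1) * (fact r * real (card H))"
      using pow_diff_le[OF RR0 RRa, of m] RRe by simp
    have p2: "real (card (RowG G)) ^ (m - 1) \<le> a ^ (m - 1)" by (rule power_mono[OF RRa RR0])
    have KK0: "real (r * fact r * d) \<ge> 0" by simp
    have "real (card (Fwd G)) \<ge> real (card (RowG G)) ^ m - real m * (real (r * fact r * d) * real (card (RowG G)) ^ (m - 1))
     - real m * real m * (real (r * fact r * d) * real (card (RowG G)) ^ (m - 1)) - real r * ((real d + real Dl) * real (r * fact r * d) ^ m)"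
      by (rule Fwd_lower[OF G])
    moreover have "real m * (real (r * fact r * d) * real (card (RowG G)) ^ (m - 1)) \<le> real m * (real (r * fact r * d) * a ^ (m - 1))"
      using p2 KK0 by (intro mult_left_mono) auto
    moreover have "real m * real m * (real (r * fact r * d) * real (card (RowG G)) ^ (m - 1)) \<le> real m * real m * (real (r * fact r * d) * a ^ (m - 1))"
      using p2 KK0 by (intro mult_left_mono) auto
    ultimately have "real (card (Fwd G)) \<ge> a ^ m - real m * a ^ (m - 1) * (real r * fact m * real (card H))
       - (real m + real m * real m) * real (r * fact r * d) * a ^ (m - 1) - real r * (real d + real Dl) * real (r * fact r * d) ^ m"
      using p1 factr by (simp add: algebra_simps)
    also have "a ^ m - real m * a ^ (m - 1) * (real r * fact m * real (card H))
       - (real m + real m * real m) * real (r * fact r * d) * a ^ (m - 1) - real r * (real d + real Dl) * real (r * fact r * d) ^ m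
       = a ^ m * (1 - \<epsilon>)"
      unfolding eps
      by (rule eps_identity[OF npos dpos a_def]) (use r2 factr in simp_all)
    finally show ?thesis .
  qed
  have fA: "finite AA" using finite_CC by (auto simp: AA_def)
  have "real (card AA) * (a ^ m * (1 - \<epsilon>)) = (\<Sum>G\<in>AA. a ^ m * (1 - \<epsilon>))" by simp
  also have "\<dots> \<le> (\<Sum>G\<in>AA. real (card (Fwd G)))" by (rule sum_mono) (rule lowG)
  also have "\<dots> = real (\<Sum>G\<in>AA. card (Fwd G))" by simp
  also have "\<dots> \<le> real (card BB * (fact m * d) ^ r)" using double_count by (simp only: of_nat_le_iff)
  also have "\<dots> = real (card BB) * (fact m * real d) ^ r" by simp
  also have "(fact m * real d) ^ r = a ^ m * (fact m * real d / real n ^ m)"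
  proof -
    have rS: "r = Suc m" using r2 by simp
    have "(fact m * real d) ^ r = (fact m * real d) ^ m * (fact m * real d)" by (metis rS power_Suc2)
    moreover have "a ^ m = (fact m * real d) ^ m * real n ^ m" unfolding a_def
      by (simp add: power_mult_distrib algebra_simps)
    ultimately show ?thesis using npos by (simp add: field_simps)
  qed
  finally have "real (card AA) * (1 - \<epsilon>) * a ^ m \<le> real (card BB) * (fact m * real d / real n ^ m) * a ^ m"
    by (simp add: algebra_simps)
  then have k1: "real (card AA) * (1 - \<epsilon>) \<le> real (card BB) * (fact m * real d / real n ^ m)"
    by (rule mult_right_le_imp_le) (use apos in simp)
  define c0 where "c0 = fact m * real d / real n ^ m"
  have c00: "c0 \<ge> 0" unfolding c0_def by simp
  have "real (card AA) \<le> real (card AA) * ((1 - \<epsilon>) * (1 + 2 * \<epsilon>))"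
  proof -
    have "(1 - \<epsilon>) * (1 + 2 * \<epsilon>) = 1 + \<epsilon> * (1 - 2 * \<epsilon>)" by (simp add: algebra_simps)
    moreover have "\<epsilon> * (1 - 2 * \<epsilon>) \<ge> 0" using eps0 small by simp
    ultimately show ?thesis using mult_left_mono[of 1 "1 + \<epsilon> * (1 - 2 * \<epsilon>)" "real (card AA)"] by simp
  qed
  also have "\<dots> = (real (card AA) * (1 - \<epsilon>)) * (1 + 2 * \<epsilon>)" by simp
  also have "\<dots> \<le> (real (card BB) * c0) * (1 + 2 * \<epsilon>)"
    using k1 eps0 unfolding c0_def by (intro mult_right_mono) auto
  also have "\<dots> \<le> (real (card AA) + real (card BB)) * (c0 * (1 + 2 * \<epsilon>))"
    using c00 eps0 by (simp add: algebra_simps)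
  finally have k2: "real (card AA) \<le> real (card CC) * (c0 * (1 + 2 * \<epsilon>))" using CC_split by simp
  show ?thesis
  proof (cases "card CC = 0")
    case True
    then show ?thesis using prob_eq c00 eps0 unfolding c0_def by simp
  next
    case False
    then have "real (card AA) / real (card CC) \<le> c0 * (1 + 2 * \<epsilon>)"
      using k2 by (simp add: divide_le_eq mult.commute)
    then show ?thesis using prob_eq unfolding c0_def by simp
  qed
qed

end
lemma final_step:
  fixes r n d h D :: nat and C P :: real
  assumes r2: "r \<ge> 2" and n1: "n \<ge> 1"
  and C: "C = 2 * (real (r-1) * real r + (real (r-1) + real (r-1) * real (r-1)) * real r ^ 2 + real r ^ (2*(r-1)+1))"
  and P: "P \<le> fact (r-1) * (real d / real n ^ (r-1)) * (1 + 2 * (real (r-1) * real r * real h / (real n * real d)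
              + (real (r-1) + real (r-1) * real (r-1)) * real r ^ 2 / real n
              + real r ^ (2 * (r-1) + 1) * (real d + real D) / real n ^ (r-1)))"
  shows "P \<le> fact (r - 1) * (real d / real n ^ (r - 1)) *
             (1 + C * (1 / real n + real d / real n ^ (r - 1)
                       + real h / (real n * real d)
                       + real D / real n ^ (r - 1)))"
proof -
  define K0 where "K0 = real (r-1) * real r"
  define K1 where "K1 = (real (r-1) + real (r-1) * real (r-1)) * real r ^ 2"
  define K3 where "K3 = real r ^ (2*(r-1)+1)"
  have K0: "K0 \<ge> 0" and K1: "K1 \<ge> 0" and K3: "K3 \<ge> 0" unfolding K0_def K1_def K3_def by auto
  have CK: "C = 2 * (K0 + K1 + K3)" unfolding C K0_def K1_def K3_def by simp
  define u0 where "u0 = real h / (real n * real d)"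
  define u1 where "u1 = 1 / real n"
  define u2 where "u2 = real d / real n ^ (r - 1)"
  define u3 where "u3 = real D / real n ^ (r - 1)"
  have u: "u0 \<ge> 0" "u1 \<ge> 0" "u2 \<ge> 0" "u3 \<ge> 0" unfolding u0_def u1_def u2_def u3_def by auto
  have eq: "real (r-1) * real r * real h / (real n * real d)
              + (real (r-1) + real (r-1) * real (r-1)) * real r ^ 2 / real n
              + real r ^ (2 * (r-1) + 1) * (real d + real D) / real n ^ (r-1)
          = K0 * u0 + K1 * u1 + K3 * u2 + K3 * u3"
    unfolding K0_def K1_def K3_def u0_def u1_def u2_def u3_def using n1 by (simp add: add_divide_distrib algebra_simps)
  have "2 * (K0 * u0 + K1 * u1 + K3 * u2 + K3 * u3) \<le> C * (u1 + u2 + u0 + u3)"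
  proof -
    have "K0 * u0 \<le> (K0 + K1 + K3) * u0" using u K1 K3 by (intro mult_right_mono) auto
    moreover have "K1 * u1 \<le> (K0 + K1 + K3) * u1" using u K0 K3 by (intro mult_right_mono) auto
    moreover have "K3 * u2 \<le> (K0 + K1 + K3) * u2" using u K0 K1 by (intro mult_right_mono) auto
    moreover have "K3 * u3 \<le> (K0 + K1 + K3) * u3" using u K0 K1 by (intro mult_right_mono) auto
    ultimately show ?thesis unfolding CK by (simp add: algebra_simps)
  qed
  then have "1 + 2 * (K0 * u0 + K1 * u1 + K3 * u2 + K3 * u3) \<le> 1 + C * (u1 + u2 + u0 + u3)" by simp
  then have "fact (r-1) * u2 * (1 + 2 * (K0 * u0 + K1 * u1 + K3 * u2 + K3 * u3)) \<le> fact (r-1) * u2 * (1 + C * (u1 + u2 + u0 + u3))"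
    using u by (intro mult_left_mono) auto
  then show ?thesis using P unfolding eq unfolding u0_def u1_def u2_def u3_def by simp
qed

theorem lemma2p1:
  fixes r :: nat
  assumes "r \<ge> 2"
  shows "\<exists>C>0. \<forall>(d :: nat \<Rightarrow> nat) (H :: nat \<Rightarrow> nat set set) (H' :: nat \<Rightarrow> nat set set).
    (\<forall>\<^sub>F n in at_top. r dvd n * d n) \<and>
    (\<lambda>n. real (d n)) \<in> o(\<lambda>n. real n ^ (r - 1)) \<and>
    (\<forall>n. H n \<subseteq> r_subsets {0..<n} r \<and> H' n \<subseteq> r_subsets {0..<n} r \<and> H n \<inter> H' n = {}) \<and>
    (\<lambda>n. real (card (H n))) \<in> o(\<lambda>n. real n * real (d n)) \<and>
    (\<lambda>n. real (maxdeg n (H' n))) \<in> o(\<lambda>n. real n ^ (r - 1))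
    \<longrightarrow> (\<forall>\<^sub>F n in at_top. \<forall>e \<in> r_subsets {0..<n} r - (H n \<union> H' n).
          cond_prob r n (d n) (H n) (H' n) e
          \<le> fact (r - 1) * (real (d n) / real n ^ (r - 1)) *
             (1 + C * (1 / real n + real (d n) / real n ^ (r - 1)
                       + real (card (H n)) / (real n * real (d n))
                       + real (maxdeg n (H' n)) / real n ^ (r - 1))))"
proof -
  define C :: real where "C = 2 * (real (r-1) * real r + (real (r-1) + real (r-1) * real (r-1)) * real r ^ 2 + real r ^ (2*(r-1)+1))"
  define K0 where "K0 = real (r-1) * real r"
  define K1 where "K1 = (real (r-1) + real (r-1) * real (r-1)) * real r ^ 2"
  define K3 where "K3 = real r ^ (2*(r-1)+1)"
  have K0: "K0 \<ge> 0" and K1: "K1 \<ge> 0" and K3: "K3 > 0" unfolding K0_def K1_def K3_def using assms by auto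
  have Cpos: "C > 0" unfolding C_def using assms by (simp add: add_pos_nonneg)
  show ?thesis
  proof (intro exI[of _ C] conjI allI impI Cpos)
    fix d :: "nat \<Rightarrow> nat" and H H' :: "nat \<Rightarrow> nat set set"
    assume hyp: "(\<forall>\<^sub>F n in at_top. r dvd n * d n) \<and>
      (\<lambda>n. real (d n)) \<in> o(\<lambda>n. real n ^ (r - 1)) \<and>
      (\<forall>n. H n \<subseteq> r_subsets {0..<n} r \<and> H' n \<subseteq> r_subsets {0..<n} r \<and> H n \<inter> H' n = {}) \<and>
      (\<lambda>n. real (card (H n))) \<in> o(\<lambda>n. real n * real (d n)) \<and>
      (\<lambda>n. real (maxdeg n (H' n))) \<in> o(\<lambda>n. real n ^ (r - 1))"
    then have od: "(\<lambda>n. real (d n)) \<in> o(\<lambda>n. real n ^ (r - 1))"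
      and HV: "\<And>n. H n \<subseteq> r_subsets {0..<n} r" "\<And>n. H' n \<subseteq> r_subsets {0..<n} r"
      and oh: "(\<lambda>n. real (card (H n))) \<in> o(\<lambda>n. real n * real (d n))"
      and oD: "(\<lambda>n. real (maxdeg n (H' n))) \<in> o(\<lambda>n. real n ^ (r - 1))"
      by blast+
    have c3: "1 / (8 * K3) > 0" using K3 by simp
    have c0: "1 / (8 * (K0 + 1)) > 0" using K0 by simp
    have ev1: "\<forall>\<^sub>F n in at_top. norm (real (d n)) \<le> 1 / (8 * K3) * norm (real n ^ (r - 1))"
      by (rule landau_o.smallD[OF od c3])
    have ev2: "\<forall>\<^sub>F n in at_top. norm (real (card (H n))) \<le> 1 / (8 * (K0 + 1)) * norm (real n * real (d n))"
      by (rule landau_o.smallD[OF oh c0])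
    have ev3: "\<forall>\<^sub>F n in at_top. norm (real (maxdeg n (H' n))) \<le> 1 / (8 * K3) * norm (real n ^ (r - 1))"
      by (rule landau_o.smallD[OF oD c3])
    have ev4: "\<forall>\<^sub>F n in at_top. n \<ge> nat (ceiling (8 * K1)) + 1" by (rule eventually_ge_at_top)
    show "\<forall>\<^sub>F n in at_top. \<forall>e \<in> r_subsets {0..<n} r - (H n \<union> H' n).
          cond_prob r n (d n) (H n) (H' n) e
          \<le> fact (r - 1) * (real (d n) / real n ^ (r - 1)) *
             (1 + C * (1 / real n + real (d n) / real n ^ (r - 1)
                       + real (card (H n)) / (real n * real (d n))
                       + real (maxdeg n (H' n)) / real n ^ (r - 1)))"
      using ev1 ev2 ev3 ev4
    proof eventually_elim
      case (elim n)
      have n1: "n \<ge> 1" using elim(4) by simp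
      have npos: "real n > 0" using n1 by simp
      have nmpos: "real n ^ (r - 1) > 0" using npos by simp
      define \<epsilon> where "\<epsilon> = real (r-1) * real r * real (card (H n)) / (real n * real (d n))
              + (real (r-1) + real (r-1) * real (r-1)) * real r ^ 2 / real n
              + real r ^ (2 * (r-1) + 1) * (real (d n) + real (maxdeg n (H' n))) / real n ^ (r-1)"
      have t0: "real (r-1) * real r * real (card (H n)) / (real n * real (d n)) \<le> 1 / 8"
      proof (cases "d n = 0")
        case True then show ?thesis by simp
      next
        case False
        then have pos: "real n * real (d n) > 0" using npos by simp
        have "real (card (H n)) \<le> 1 / (8 * (K0 + 1)) * (real n * real (d n))" using elim(2) by simp
        then have "real (card (H n)) / (real n * real (d n)) \<le> 1 / (8 * (K0 + 1))"
          using pos by (simp add: divide_le_eq mult.commute)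
        then have "K0 * (real (card (H n)) / (real n * real (d n))) \<le> K0 * (1 / (8 * (K0 + 1)))"
          using K0 by (intro mult_left_mono) auto
        also have "\<dots> \<le> 1 / 8" using K0 by (simp add: field_simps)
        finally show ?thesis unfolding K0_def by simp
      qed
      have t1: "(real (r-1) + real (r-1) * real (r-1)) * real r ^ 2 / real n \<le> 1 / 8"
      proof -
        have "8 * K1 \<le> real n" using elim(4) by linarith
        then show ?thesis unfolding K1_def using npos by (simp add: field_simps)
      qed
      have t2: "K3 * (real (d n) / real n ^ (r-1)) \<le> 1 / 8"
      proof -
        have "real (d n) \<le> 1 / (8 * K3) * real n ^ (r - 1)" using elim(1) by simp
        then have "real (d n) / real n ^ (r-1) \<le> 1 / (8 * K3)" using nmpos by (simp add: divide_le_eq mult.commute)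
        then have "K3 * (real (d n) / real n ^ (r-1)) \<le> K3 * (1 / (8 * K3))" using K3 by (intro mult_left_mono) auto
        then show ?thesis using K3 by simp
      qed
      have t3: "K3 * (real (maxdeg n (H' n)) / real n ^ (r-1)) \<le> 1 / 8"
      proof -
        have "real (maxdeg n (H' n)) \<le> 1 / (8 * K3) * real n ^ (r - 1)" using elim(3) by simp
        then have "real (maxdeg n (H' n)) / real n ^ (r-1) \<le> 1 / (8 * K3)" using nmpos by (simp add: divide_le_eq mult.commute)
        then have "K3 * (real (maxdeg n (H' n)) / real n ^ (r-1)) \<le> K3 * (1 / (8 * K3))" using K3 by (intro mult_left_mono) auto
        then show ?thesis using K3 by simp
      qed
      have split: "real r ^ (2 * (r-1) + 1) * (real (d n) + real (maxdeg n (H' n))) / real n ^ (r-1)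
         = K3 * (real (d n) / real n ^ (r-1)) + K3 * (real (maxdeg n (H' n)) / real n ^ (r-1))"
        unfolding K3_def by (simp add: add_divide_distrib algebra_simps)
      have small: "\<epsilon> \<le> 1 / 2" unfolding \<epsilon>_def split using t0 t1 t2 t3 by linarith
      show ?case
      proof
        fix e assume e: "e \<in> r_subsets {0..<n} r - (H n \<union> H' n)"
        then have fe: "finite e" "card e = r" unfolding r_subsets_def using assms
          by (auto intro: finite_subset)
        obtain x where x: "bij_betw x {0..<r} e" using ex_bij_betw_nat_finite[OF fe(1)] fe(2) by auto
        interpret swc r n "d n" "H n" "H' n" e x
          by unfold_locales (use assms HV e x in auto)
        have "cond_prob r n (d n) (H n) (H' n) e \<le> fact (r-1) * (real (d n) / real n ^ (r-1)) * (1 + 2 * \<epsilon>)"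
          by (rule core[OF \<epsilon>_def small])
        then show "cond_prob r n (d n) (H n) (H' n) e
          \<le> fact (r - 1) * (real (d n) / real n ^ (r - 1)) *
             (1 + C * (1 / real n + real (d n) / real n ^ (r - 1)
                       + real (card (H n)) / (real n * real (d n))
                       + real (maxdeg n (H' n)) / real n ^ (r - 1)))"
          by (intro final_step[OF assms n1 C_def]) (simp add: \<epsilon>_def)
      qed
    qed
  qed
qed

end
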